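(* Fix a positive integer $q$ and $\epsilon\in(0,1)$. Let $P_n$ be a random many-to-one school choice problem with $n$ schools of quota $q$ and $nq$ students, and let $I_0\subseteq I$, $S_1\subseteq S$ be fixed subsets with $|I_0|\ge\epsilon nq$ and $|S_1|\ge\epsilon n$. The probability of the event that the students in $I_0$ together make at least $n\sqrt{\log n}$ applications during DA and no student in $I_0$ ever applies to a school in $S_1$ is at most $(1-\epsilon)^{n\sqrt{\log n}}$.
   Context: A random many-to-one school choice problem $P_n$ with quota $q$: a set $S$ of $n$ schools, each with quota $q$, and a set $I$ of $nq$ students; each student's strict preference over $S$ and each school's strict priority over $I$ are uniformly random linear orders, all mutually independent. Student-proposing deferred acceptance (DA): in each round every student not tentatively held applies to her most preferred school that has not yet rejected her; each school tentatively holds its $q$ highest-priority applicants and rejects the rest; stop when a round has no new rejection. Student $i$ applies to school $s$ if at some round she proposes to $s$; the number of applications a student makes is the number of schools she applies to. *)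

theory Defs
  imports "HOL-Probability.Probability" "HOL-Combinatorics.Multiset_Permutations"
begin

text \<open>Students are 0..<n*q, schools are 0..<n. A profile is a pair (pref, prio):
  pref i is student i's preference list over schools (most preferred first),
  prio s is school s's priority list over students (highest priority first).\<close>

type_synonym profile = "(nat \<Rightarrow> nat list) \<times> (nat \<Rightarrow> nat list)"

definition profiles :: "nat \<Rightarrow> nat \<Rightarrow> profile set" where
  "profiles n q = (PiE {..<n*q} (\<lambda>_. permutations_of_set {..<n}))
                  \<times> (PiE {..<n} (\<lambda>_. permutations_of_set {..<n*q}))"

definition random_problem :: "nat \<Rightarrow> nat \<Rightarrow> profile pmf" where
  "random_problem n q = pmf_of_set (profiles n q)"

definition prec :: "'a list \<Rightarrow> 'a \<Rightarrow> 'a \<Rightarrow> bool" where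
  "prec xs a b \<longleftrightarrow> (\<exists>k l. k < l \<and> l < length xs \<and> xs ! k = a \<and> xs ! l = b)"

text \<open>DA state: k i = number of rejections student i has received so far;
  student i currently applies to (or is held by) school pref i ! k i.\<close>
definition applicants :: "nat \<Rightarrow> nat \<Rightarrow> profile \<Rightarrow> (nat \<Rightarrow> nat) \<Rightarrow> nat \<Rightarrow> nat set" where
  "applicants n q P k s = {i \<in> {..<n*q}. k i < n \<and> fst P i ! k i = s}"

definition rejected :: "nat \<Rightarrow> nat \<Rightarrow> profile \<Rightarrow> (nat \<Rightarrow> nat) \<Rightarrow> nat \<Rightarrow> bool" where
  "rejected n q P k i \<longleftrightarrow> i < n*q \<and> k i < n \<and>
     (let s = fst P i ! k i in
        card {j \<in> applicants n q P k s. prec (snd P s) j i} \<ge> q)"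

definition da_round :: "nat \<Rightarrow> nat \<Rightarrow> profile \<Rightarrow> (nat \<Rightarrow> nat) \<Rightarrow> (nat \<Rightarrow> nat)" where
  "da_round n q P k = (\<lambda>i. if rejected n q P k i then Suc (k i) else k i)"

definition da_state :: "nat \<Rightarrow> nat \<Rightarrow> profile \<Rightarrow> nat \<Rightarrow> (nat \<Rightarrow> nat)" where
  "da_state n q P t = (da_round n q P ^^ t) (\<lambda>_. 0)"

definition applied :: "nat \<Rightarrow> nat \<Rightarrow> profile \<Rightarrow> nat \<Rightarrow> nat set" where
  "applied n q P i = {fst P i ! j | j t. j \<le> da_state n q P t i \<and> j < n}"

definition num_applications :: "nat \<Rightarrow> nat \<Rightarrow> profile \<Rightarrow> nat \<Rightarrow> nat" where
  "num_applications n q P i = card (applied n q P i)"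

end

theory Submission
  imports Defs
begin


lemma da_state_Suc: "da_state n q P (Suc t) = da_round n q P (da_state n q P t)"
  by (simp add: da_state_def)

lemma da_state_le: "da_state n q P t i \<le> n"
proof (induction t arbitrary: i)
  case 0 then show ?case by (simp add: da_state_def)
next
  case (Suc t)
  then show ?case by (auto simp: da_state_Suc da_round_def rejected_def)
qed

definition Kmax :: "nat \<Rightarrow> nat \<Rightarrow> profile \<Rightarrow> nat \<Rightarrow> nat" where
  "Kmax n q P i = Max (range (\<lambda>t. da_state n q P t i))"

definition mlen :: "nat \<Rightarrow> nat \<Rightarrow> profile \<Rightarrow> nat \<Rightarrow> nat" where
  "mlen n q P i = min (Suc (Kmax n q P i)) n"

lemma range_fin: "finite (range (\<lambda>t. da_state n q P t i))"
  by (rule finite_subset[of _ "{..n}"]) (auto simp: da_state_le)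

lemma da_le_Kmax: "da_state n q P t i \<le> Kmax n q P i"
  unfolding Kmax_def by (rule Max_ge[OF range_fin]) auto

lemma Kmax_attained: "\<exists>t. Kmax n q P i = da_state n q P t i"
proof -
  have "Kmax n q P i \<in> range (\<lambda>t. da_state n q P t i)"
    unfolding Kmax_def by (rule Max_in[OF range_fin]) auto
  then show ?thesis by auto
qed

lemma mlen_le: "mlen n q P i \<le> n" by (simp add: mlen_def)

lemma prof_len: assumes "P \<in> profiles n q" "i < n*q"
  shows "fst P i \<in> permutations_of_set {..<n}" "length (fst P i) = n" "distinct (fst P i)"
    "set (fst P i) = {..<n}"
  using assms by (auto simp: profiles_def PiE_def Pi_def length_finite_permutations_of_set permutations_of_set_def)

lemma applied_eq:
  assumes "P \<in> profiles n q" "i < n*q"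
  shows "applied n q P i = set (take (mlen n q P i) (fst P i))"
proof -
  have len: "length (fst P i) = n" using prof_len[OF assms] by simp
  obtain t0 where t0: "Kmax n q P i = da_state n q P t0 i" using Kmax_attained by blast
  have "applied n q P i = {fst P i ! j | j. j < mlen n q P i}"
  proof (intro equalityI subsetI)
    fix x assume "x \<in> applied n q P i"
    then obtain j t where "x = fst P i ! j" "j \<le> da_state n q P t i" "j < n"
      unfolding applied_def by blast
    moreover have "j < mlen n q P i"
      using calculation da_le_Kmax[of n q P t i] unfolding mlen_def by simp
    ultimately show "x \<in> {fst P i ! j | j. j < mlen n q P i}" by blast
  next
    fix x assume "x \<in> {fst P i ! j | j. j < mlen n q P i}"
    then obtain j where "x = fst P i ! j" "j < mlen n q P i" by blast
    then have "j \<le> da_state n q P t0 i" "j < n" using t0 unfolding mlen_def by simp_all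
    then show "x \<in> applied n q P i" unfolding applied_def using \<open>x = _\<close> by blast
  qed
  also have "\<dots> = set (take (mlen n q P i) (fst P i))"
    using len mlen_le[of n q P i] by (auto simp: set_conv_nth; metis nth_take)
  finally show ?thesis .
qed

lemma num_app_eq:
  assumes "P \<in> profiles n q" "i < n*q"
  shows "num_applications n q P i = mlen n q P i"
  using applied_eq[OF assms] prof_len[OF assms] mlen_le[of n q P i]
  by (simp add: num_applications_def distinct_card)

lemma stopping:
  assumes P: "P \<in> profiles n q" and P': "P' \<in> profiles n q" and snd: "snd P' = snd P"
    and tk: "\<forall>i<n*q. take (mlen n q P i) (fst P' i) = take (mlen n q P i) (fst P i)"
  shows "da_state n q P' t = da_state n q P t"
proof (induction t)
  case 0 then show ?case by (simp add: da_state_def)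
next
  case (Suc t)
  define k where "k = da_state n q P t"
  have key: "fst P' i ! k i = fst P i ! k i" if "i < n*q" "k i < n" for i
  proof -
    have "k i < mlen n q P i" using da_le_Kmax[of n q P t i] that unfolding k_def mlen_def by simp
    then have "take (mlen n q P i) (fst P' i) ! k i = take (mlen n q P i) (fst P i) ! k i"
      using tk that by simp
    then show ?thesis using \<open>k i < mlen n q P i\<close> by simp
  qed
  have app: "applicants n q P' k s = applicants n q P k s" for s
    unfolding applicants_def using key by auto
  have "rejected n q P' k i = rejected n q P k i" for i
    unfolding rejected_def Let_def using key[of i] app snd by auto
  then have "da_round n q P' k = da_round n q P k"
    unfolding da_round_def by simp
  then show ?case using Suc by (simp add: da_state_Suc k_def)
qed

lemma stopping_mlen:
  assumes "P \<in> profiles n q" "P' \<in> profiles n q" "snd P' = snd P"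
    "\<forall>i<n*q. take (mlen n q P i) (fst P' i) = take (mlen n q P i) (fst P i)"
  shows "mlen n q P' = mlen n q P"
  using stopping[OF assms] by (simp add: mlen_def Kmax_def fun_eq_iff)




lemma perm_split:
  assumes "\<sigma> \<in> permutations_of_set U"
  shows "drop m \<sigma> \<in> permutations_of_set (U - set (take m \<sigma>))"
proof -
  have d: "distinct \<sigma>" "set \<sigma> = U" using assms by (auto simp: permutations_of_set_def)
  have "set (take m \<sigma>) \<inter> set (drop m \<sigma>) = {}"
    using d(1) by (metis append_take_drop_id distinct_append)
  moreover have "set \<sigma> = set (take m \<sigma>) \<union> set (drop m \<sigma>)"
    by (metis append_take_drop_id set_append)
  ultimately show ?thesis using d by (auto simp: permutations_of_set_def)
qed

lemma ext_card_le:
  assumes "finite U" "distinct p" "set p \<subseteq> U" "length p = m"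
  shows "card {\<sigma> \<in> permutations_of_set U. take m \<sigma> = p} \<le> fact (card U - m)"
proof -
  have "{\<sigma> \<in> permutations_of_set U. take m \<sigma> = p} \<subseteq> (\<lambda>ys. p @ ys) ` permutations_of_set (U - set p)"
  proof
    fix \<sigma> assume "\<sigma> \<in> {\<sigma> \<in> permutations_of_set U. take m \<sigma> = p}"
    then have s: "\<sigma> \<in> permutations_of_set U" "take m \<sigma> = p" by auto
    then have "\<sigma> = p @ drop m \<sigma>" by (metis append_take_drop_id)
    moreover have "drop m \<sigma> \<in> permutations_of_set (U - set p)" using perm_split[OF s(1), of m] s(2) by simp
    ultimately show "\<sigma> \<in> (\<lambda>ys. p @ ys) ` permutations_of_set (U - set p)" by blast
  qed
  then have "card {\<sigma> \<in> permutations_of_set U. take m \<sigma> = p} \<le> card ((\<lambda>ys. p @ ys) ` permutations_of_set (U - set p))"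
    by (intro card_mono) auto
  also have "\<dots> \<le> card (permutations_of_set (U - set p))" by (rule card_image_le) simp
  also have "\<dots> = fact (card U - m)"
    using assms by (simp add: card_Diff_subset distinct_card)
  finally show ?thesis .
qed

definition Gset :: "nat set \<Rightarrow> nat set \<Rightarrow> nat list set" where
  "Gset U S = (\<lambda>(xs,ys). xs @ ys) ` (permutations_of_set (U - S) \<times> permutations_of_set S)"

lemma Gset_sub: "S \<subseteq> U \<Longrightarrow> Gset U S \<subseteq> permutations_of_set U"
  by (auto simp: Gset_def permutations_of_set_def)

lemma Gset_card: "card (Gset U S) \<le> fact (card (U - S)) * fact (card S)"
proof (cases "finite (U - S) \<and> finite S")
  case True
  have "card (Gset U S) \<le> card (permutations_of_set (U - S) \<times> permutations_of_set S)"
    unfolding Gset_def by (rule card_image_le) simp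
  also have "\<dots> = fact (card (U - S)) * fact (card S)"
    using True by (simp add: card_cartesian_product)
  finally show ?thesis .
next
  case False
  then have "Gset U S = {}" by (auto simp: Gset_def permutations_of_set_infinite)
  then show ?thesis by simp
qed

lemma Gset_ne: "finite U \<Longrightarrow> finite S \<Longrightarrow> Gset U S \<noteq> {}"
  by (simp add: Gset_def)

lemma Gset_ext_card:
  assumes "finite U" "S \<subseteq> U" "distinct p" "set p \<subseteq> U - S" "length p = m"
  shows "fact (card U - card S - m) * fact (card S) \<le> card ({\<sigma> \<in> permutations_of_set U. take m \<sigma> = p} \<inter> Gset U S)"
proof -
  define f where "f = (\<lambda>(ys,zs). (p @ ys) @ (zs::nat list))"
  have fin: "finite S" using assms finite_subset by blast
  have "f ` (permutations_of_set (U - S - set p) \<times> permutations_of_set S) \<subseteq> {\<sigma> \<in> permutations_of_set U. take m \<sigma> = p} \<inter> Gset U S"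
  proof
    fix x assume "x \<in> f ` (permutations_of_set (U - S - set p) \<times> permutations_of_set S)"
    then obtain ys zs where x: "x = (p @ ys) @ zs" and ys: "ys \<in> permutations_of_set (U - S - set p)"
      and zs: "zs \<in> permutations_of_set S" by (auto simp: f_def)
    have pys: "p @ ys \<in> permutations_of_set (U - S)"
      using ys assms by (auto simp: permutations_of_set_def)
    then have "x \<in> Gset U S" using x zs unfolding Gset_def by blast
    moreover have "take m x = p" using x assms by simp
    ultimately show "x \<in> {\<sigma> \<in> permutations_of_set U. take m \<sigma> = p} \<inter> Gset U S"
      using Gset_sub[OF assms(2)] by auto
  qed
  moreover have "inj_on f (permutations_of_set (U - S - set p) \<times> permutations_of_set S)"
  proof (rule inj_onI)
    fix a b assume a: "a \<in> permutations_of_set (U - S - set p) \<times> permutations_of_set S"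
      and b: "b \<in> permutations_of_set (U - S - set p) \<times> permutations_of_set S" and e: "f a = f b"
    have "length (fst a) = length (fst b)"
      using a b by (auto simp: length_finite_permutations_of_set)
    then show "a = b" using e unfolding f_def
      by (cases a, cases b) auto
  qed
  ultimately have "card (f ` (permutations_of_set (U - S - set p) \<times> permutations_of_set S)) \<le> card ({\<sigma> \<in> permutations_of_set U. take m \<sigma> = p} \<inter> Gset U S)"
    by (intro card_mono) auto
  then have "card (permutations_of_set (U - S - set p) \<times> permutations_of_set S) \<le> card ({\<sigma> \<in> permutations_of_set U. take m \<sigma> = p} \<inter> Gset U S)"
    using card_image[OF \<open>inj_on f _\<close>] by simp
  moreover have "card (U - S - set p) = card U - card S - m"
  proof -
    have "card (U - S - set p) = card (U - S) - card (set p)"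
      using assms by (intro card_Diff_subset) auto
    also have "card (U - S) = card U - card S" using assms fin by (intro card_Diff_subset) auto
    also have "card (set p) = m" using assms by (simp add: distinct_card)
    finally show ?thesis .
  qed
  moreover have "card (permutations_of_set (U - S - set p) \<times> permutations_of_set S) = fact (card (U - S - set p)) * fact (card S)"
    using assms(1) fin by (simp add: card_cartesian_product)
  ultimately show ?thesis by simp
qed

lemma fact_ratio:
  fixes c :: real
  assumes "s \<le> n" "real (n - s) \<le> c * real n" "0 \<le> c" "a \<le> n - s" "c \<le> 1"
  shows "fact (n - a) * fact (n - s) \<le> c ^ a * fact (n - s - a) * (fact n :: real)"
  using assms(4)
proof (induction a)
  case 0 then show ?case by simp
next
  case (Suc a)
  have IH: "fact (n - a) * fact (n - s) \<le> c ^ a * fact (n - s - a) * (fact n :: real)"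
    using Suc by simp
  have h1: "n - s - a = Suc (n - s - Suc a)" using Suc.prems by arith
  have h2: "n - a = Suc (n - Suc a)" using Suc.prems assms(1) by arith
  have e1: "(fact (n - s - a) :: real) = real (n - s - a) * fact (n - s - Suc a)"
    unfolding h1 by simp
  have e2: "(fact (n - a) :: real) = real (n - a) * fact (n - Suc a)"
    unfolding h2 by simp
  have pos: "0 < real (n - s - a)" using Suc.prems by simp
  have cmp: "real (n - s - a) \<le> c * real (n - a)"
  proof -
    have "real (n - s - a) = real (n - s) - real a" using Suc.prems by (simp add: of_nat_diff)
    also have "\<dots> \<le> c * real n - c * real a"
    proof -
      have "c * real a \<le> real a" using assms(3,5) by (simp add: mult_left_le_one_le)
      then show ?thesis using assms(2) by linarith
    qed
    also have "\<dots> = c * real (n - a)" using Suc.prems assms(1) by (simp add: of_nat_diff algebra_simps)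
    finally show ?thesis .
  qed
  have "real (n - s - a) * (fact (n - Suc a) * fact (n - s)) \<le> c * (real (n - a) * fact (n - Suc a) * fact (n - s))"
  proof -
    have "real (n - s - a) * (fact (n - Suc a) * fact (n - s)) \<le> (c * real (n - a)) * (fact (n - Suc a) * fact (n - s))"
      using cmp by (intro mult_right_mono) auto
    then show ?thesis by (simp add: algebra_simps)
  qed
  also have "\<dots> \<le> c * (c ^ a * fact (n - s - a) * fact n)"
    using IH e2 assms(3) by (intro mult_left_mono) auto
  also have "\<dots> = real (n - s - a) * (c ^ Suc a * fact (n - s - Suc a) * fact n)"
    using e1 by (simp add: algebra_simps)
  finally show ?case by (rule mult_left_le_imp_le[OF _ pos])
qed




lemma double_count:
  fixes E Om :: "'a set" and C :: "'a \<Rightarrow> 'a set"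
  assumes fE: "finite E" and fOm: "finite Om" and fC: "\<And>P. finite (C P)"
    and rfl: "\<And>P. P \<in> E \<Longrightarrow> P \<in> C P"
    and cl: "\<And>P P'. P \<in> E \<Longrightarrow> P' \<in> C P \<Longrightarrow> C P' = C P"
  shows "(\<Sum>P\<in>E. real (card (C P \<inter> Om)) / real (card (C P))) \<le> real (card Om)"
proof -
  have "(\<Sum>P\<in>E. real (card (C P \<inter> Om)) / real (card (C P)))
      = (\<Sum>P\<in>E. \<Sum>P'\<in>Om. if P' \<in> C P then 1 / real (card (C P)) else 0)"
  proof (rule sum.cong[OF refl])
    fix P assume "P \<in> E"
    have "real (card (C P \<inter> Om)) / real (card (C P)) = (\<Sum>P'\<in>Om \<inter> C P. 1 / real (card (C P)))"
      by (simp add: Int_commute divide_inverse)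
    also have "\<dots> = (\<Sum>P'\<in>Om. if P' \<in> C P then 1 / real (card (C P)) else 0)"
      by (rule sum.inter_restrict[OF fOm])
    finally show "real (card (C P \<inter> Om)) / real (card (C P)) = (\<Sum>P'\<in>Om. if P' \<in> C P then 1 / real (card (C P)) else 0)" .
  qed
  also have "\<dots> = (\<Sum>P'\<in>Om. \<Sum>P\<in>E. if P' \<in> C P then 1 / real (card (C P)) else 0)"
    by (rule sum.swap)
  also have "\<dots> \<le> (\<Sum>P'\<in>Om. 1)"
  proof (rule sum_mono)
    fix P' assume "P' \<in> Om"
    have "(\<Sum>P\<in>E. if P' \<in> C P then 1 / real (card (C P)) else 0) \<le> (\<Sum>P\<in>E. if P \<in> C P' then 1 / real (card (C P')) else 0)"
    proof (rule sum_mono)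
      fix P assume P: "P \<in> E"
      show "(if P' \<in> C P then 1 / real (card (C P)) else 0) \<le> (if P \<in> C P' then 1 / real (card (C P')) else 0)"
      proof (cases "P' \<in> C P")
        case True
        then have "C P' = C P" by (rule cl[OF P])
        then show ?thesis using True rfl[OF P] by simp
      next
        case False then show ?thesis by simp
      qed
    qed
    also have "\<dots> = (\<Sum>P\<in>E \<inter> C P'. 1 / real (card (C P')))"
      by (rule sum.inter_restrict[OF fE, symmetric])
    also have "\<dots> = real (card (E \<inter> C P')) / real (card (C P'))" by (simp add: divide_inverse)
    also have "\<dots> \<le> 1"
    proof (cases "card (C P') = 0")
      case True then show ?thesis by simp
    next
      case False
      have "card (E \<inter> C P') \<le> card (C P')" by (rule card_mono[OF fC]) auto
      then show ?thesis using False by simp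
    qed
    finally show "(\<Sum>P\<in>E. if P' \<in> C P then 1 / real (card (C P)) else 0) \<le> 1" .
  qed
  also have "\<dots> = real (card Om)" by simp
  finally show ?thesis .
qed




definition CC :: "nat \<Rightarrow> nat \<Rightarrow> profile \<Rightarrow> profile set" where
  "CC n q P = {P' \<in> profiles n q. snd P' = snd P \<and>
      (\<forall>i<n*q. take (mlen n q P i) (fst P' i) = take (mlen n q P i) (fst P i))}"

definition Ext :: "nat \<Rightarrow> nat \<Rightarrow> profile \<Rightarrow> nat \<Rightarrow> nat list set" where
  "Ext n q P i = {\<sigma> \<in> permutations_of_set {..<n}. take (mlen n q P i) \<sigma> = take (mlen n q P i) (fst P i)}"

definition Dp :: "nat \<Rightarrow> nat set \<Rightarrow> nat set \<Rightarrow> nat \<Rightarrow> nat list set" where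
  "Dp n I0 S1 i = (if i \<in> I0 then Gset {..<n} S1 else permutations_of_set {..<n})"

definition PR :: "nat \<Rightarrow> nat \<Rightarrow> (nat \<Rightarrow> nat list) set" where
  "PR n q = PiE {..<n} (\<lambda>_. permutations_of_set {..<n*q})"

definition OmP :: "nat \<Rightarrow> nat \<Rightarrow> nat set \<Rightarrow> nat set \<Rightarrow> profile set" where
  "OmP n q I0 S1 = PiE {..<n*q} (Dp n I0 S1) \<times> PR n q"

lemma profiles_alt: "profiles n q = PiE {..<n*q} (\<lambda>_. permutations_of_set {..<n}) \<times> PR n q"
  by (simp add: profiles_def PR_def)

lemma CC_eq:
  assumes "P \<in> profiles n q"
  shows "CC n q P = (\<lambda>f. (f, snd P)) ` PiE {..<n*q} (Ext n q P)"
proof (intro equalityI subsetI)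
  fix P' assume a: "P' \<in> CC n q P"
  have P0: "P' \<in> profiles n q" "snd P' = snd P"
    "\<forall>i<n*q. take (mlen n q P i) (fst P' i) = take (mlen n q P i) (fst P i)"
    using a unfolding CC_def by blast+
  have f1: "fst P' \<in> PiE {..<n*q} (\<lambda>_. permutations_of_set {..<n})"
    using P0(1) unfolding profiles_alt by (simp add: mem_Times_iff)
  have "fst P' \<in> PiE {..<n*q} (Ext n q P)"
    unfolding PiE_iff
  proof
    show "\<forall>i\<in>{..<n*q}. fst P' i \<in> Ext n q P i"
      using f1 P0(3) unfolding Ext_def PiE_iff by blast
    show "fst P' \<in> extensional {..<n*q}" using f1 unfolding PiE_iff by blast
  qed
  moreover have "P' = (fst P', snd P)" using P0(2) by (metis prod.collapse)
  ultimately show "P' \<in> (\<lambda>f. (f, snd P)) ` PiE {..<n*q} (Ext n q P)" by blast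
next
  fix P' assume "P' \<in> (\<lambda>f. (f, snd P)) ` PiE {..<n*q} (Ext n q P)"
  then obtain f where f: "P' = (f, snd P)" "f \<in> PiE {..<n*q} (Ext n q P)" by blast
  have "snd P \<in> PR n q" using assms unfolding profiles_alt by (simp add: mem_Times_iff)
  moreover have "f \<in> PiE {..<n*q} (\<lambda>_. permutations_of_set {..<n})"
    using f(2) unfolding Ext_def PiE_iff by blast
  ultimately have "P' \<in> profiles n q" using f(1) unfolding profiles_alt by simp
  moreover have "\<forall>i<n*q. take (mlen n q P i) (fst P' i) = take (mlen n q P i) (fst P i)"
    using f unfolding Ext_def PiE_iff by simp
  ultimately show "P' \<in> CC n q P" using f(1) unfolding CC_def by simp
qed

lemma CC_Om_eq:
  assumes "P \<in> profiles n q" "S1 \<subseteq> {..<n}"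
  shows "CC n q P \<inter> OmP n q I0 S1 = (\<lambda>f. (f, snd P)) ` PiE {..<n*q} (\<lambda>i. Ext n q P i \<inter> Dp n I0 S1 i)"
proof -
  have sub: "Dp n I0 S1 i \<subseteq> permutations_of_set {..<n}" for i
    using Gset_sub[OF assms(2)] by (simp add: Dp_def)
  have sP: "snd P \<in> PR n q" using assms by (auto simp: profiles_alt)
  have gen: "(\<lambda>f. (f, snd P)) ` A \<inter> (B \<times> PR n q) = (\<lambda>f. (f, snd P)) ` (A \<inter> B)" for A B :: "(nat \<Rightarrow> nat list) set"
    using sP by blast
  show ?thesis unfolding CC_eq[OF assms(1)] OmP_def gen PiE_Int ..
qed

lemma inj_pair: "inj_on (\<lambda>f. (f, c)) A" by (auto simp: inj_on_def)

lemma card_CC: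
  assumes "P \<in> profiles n q"
  shows "card (CC n q P) = (\<Prod>i<n*q. card (Ext n q P i))"
  unfolding CC_eq[OF assms] by (simp add: card_image[OF inj_pair] card_PiE)

lemma card_CC_Om:
  assumes "P \<in> profiles n q" "S1 \<subseteq> {..<n}"
  shows "card (CC n q P \<inter> OmP n q I0 S1) = (\<Prod>i<n*q. card (Ext n q P i \<inter> Dp n I0 S1 i))"
  unfolding CC_Om_eq[OF assms] by (simp add: card_image[OF inj_pair] card_PiE)

lemma card_profiles: "card (profiles n q) = (\<Prod>i<n*q. fact n) * card (PR n q)"
  by (simp add: profiles_alt card_cartesian_product card_PiE)

lemma card_OmP: "card (OmP n q I0 S1) = (\<Prod>i<n*q. card (Dp n I0 S1 i)) * card (PR n q)"
  by (simp add: OmP_def card_cartesian_product card_PiE)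

lemma finite_profiles: "finite (profiles n q)"
  by (simp add: profiles_def finite_PiE)

lemma CC_sub: "CC n q P \<subseteq> profiles n q" by (auto simp: CC_def)

lemma CC_refl: "P \<in> profiles n q \<Longrightarrow> P \<in> CC n q P" by (simp add: CC_def)

lemma CC_cl:
  assumes "P \<in> profiles n q" "P' \<in> CC n q P"
  shows "CC n q P' = CC n q P"
proof -
  have P': "P' \<in> profiles n q" "snd P' = snd P"
    "\<forall>i<n*q. take (mlen n q P i) (fst P' i) = take (mlen n q P i) (fst P i)"
    using assms(2) by (auto simp: CC_def)
  have eq: "mlen n q P' = mlen n q P" by (rule stopping_mlen[OF assms(1) P'])
  have h: "(\<forall>i<n*q. take (mlen n q P i) (fst R i) = take (mlen n q P i) (fst P' i)) \<longleftrightarrow>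
        (\<forall>i<n*q. take (mlen n q P i) (fst R i) = take (mlen n q P i) (fst P i))" for R
    using P'(3) by simp
  show ?thesis unfolding CC_def eq
  proof (rule Collect_cong)
    fix R show "(R \<in> profiles n q \<and> snd R = snd P' \<and> (\<forall>i<n*q. take (mlen n q P i) (fst R i) = take (mlen n q P i) (fst P' i))) =
      (R \<in> profiles n q \<and> snd R = snd P \<and> (\<forall>i<n*q. take (mlen n q P i) (fst R i) = take (mlen n q P i) (fst P i)))"
      using h[of R] P'(2) by simp
  qed
qed




lemma coord_ineq:
  fixes \<epsilon> :: real
  assumes P: "P \<in> profiles n q" and i: "i < n*q" and S1: "S1 \<subseteq> {..<n}"
    and e0: "0 < \<epsilon>" and e1: "\<epsilon> < 1" and cS: "real (card S1) \<ge> \<epsilon> * real n"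
    and av: "i \<in> I0 \<longrightarrow> set (take (mlen n q P i) (fst P i)) \<inter> S1 = {}"
  shows "real (card (Ext n q P i)) * real (card (Dp n I0 S1 i))
     \<le> (if i \<in> I0 then (1 - \<epsilon>) ^ mlen n q P i else 1) * real (card (Ext n q P i \<inter> Dp n I0 S1 i)) * fact n"
proof (cases "i \<in> I0")
  case False
  have "Ext n q P i \<subseteq> permutations_of_set {..<n}" by (auto simp: Ext_def)
  then have "Ext n q P i \<inter> Dp n I0 S1 i = Ext n q P i" using False by (auto simp: Dp_def)
  then show ?thesis using False by (simp add: Dp_def)
next
  case True
  define m where "m = mlen n q P i"
  define p where "p = take m (fst P i)"
  define s where "s = card S1"
  have len: "length (fst P i) = n" "distinct (fst P i)" "set (fst P i) = {..<n}"
    using prof_len[OF P i] by auto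
  have mn: "m \<le> n" unfolding m_def by (rule mlen_le)
  have lp: "length p = m" using len mn by (simp add: p_def)
  have dp: "distinct p" using len by (simp add: p_def)
  have spU: "set p \<subseteq> {..<n}" using len set_take_subset unfolding p_def by metis
  have spS: "set p \<inter> S1 = {}" using av True by (simp add: p_def m_def)
  have sp: "set p \<subseteq> {..<n} - S1" using spU spS by blast
  have cUS: "card ({..<n} - S1) = n - s" using S1 by (simp add: card_Diff_subset s_def finite_subset)
  have msn: "m \<le> n - s"
  proof -
    have "m = card (set p)" using dp lp by (simp add: distinct_card)
    also have "\<dots> \<le> card ({..<n} - S1)" by (rule card_mono[OF _ sp]) simp
    finally show ?thesis using cUS by simp
  qed
  have sn: "s \<le> n" unfolding s_def using card_mono[OF _ S1] by simp
  have Ext_eq: "Ext n q P i = {\<sigma> \<in> permutations_of_set {..<n}. take m \<sigma> = p}"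
    by (simp add: Ext_def m_def p_def)
  have e: "card (Ext n q P i) \<le> fact (n - m)"
    unfolding Ext_eq using ext_card_le[of "{..<n}" p m] dp spU lp by simp
  have g: "card (Dp n I0 S1 i) \<le> fact (n - s) * fact s"
    using True Gset_card[of "{..<n}" S1] cUS by (simp add: Dp_def s_def)
  have f: "fact (n - s - m) * fact s \<le> card (Ext n q P i \<inter> Dp n I0 S1 i)"
    unfolding Ext_eq using True Gset_ext_card[of "{..<n}" S1 p m] S1 dp sp lp by (simp add: Dp_def s_def)
  have cmp: "real (n - s) \<le> (1 - \<epsilon>) * real n"
    using cS sn by (simp add: s_def of_nat_diff algebra_simps)
  have fr: "fact (n - m) * fact (n - s) \<le> (1 - \<epsilon>) ^ m * fact (n - s - m) * (fact n :: real)"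
    by (rule fact_ratio[OF sn cmp _ msn]) (use e1 e0 in auto)
  have "real (card (Ext n q P i)) * real (card (Dp n I0 S1 i)) \<le> fact (n - m) * (fact (n - s) * fact s)"
  proof (rule mult_mono)
    show "real (card (Ext n q P i)) \<le> fact (n - m)" using e by (metis of_nat_fact of_nat_le_iff)
    show "real (card (Dp n I0 S1 i)) \<le> fact (n - s) * fact s" using g by (metis of_nat_fact of_nat_le_iff of_nat_mult)
  qed auto
  also have "\<dots> = (fact (n - m) * fact (n - s)) * fact s" by simp
  also have "\<dots> \<le> ((1 - \<epsilon>) ^ m * fact (n - s - m) * fact n) * fact s"
    using fr by (intro mult_right_mono) auto
  also have "\<dots> = (1 - \<epsilon>) ^ m * (fact (n - s - m) * fact s) * fact n" by (simp add: algebra_simps)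
  also have "\<dots> \<le> (1 - \<epsilon>) ^ m * real (card (Ext n q P i \<inter> Dp n I0 S1 i)) * fact n"
  proof -
    have "(fact (n - s - m) * fact s :: real) \<le> real (card (Ext n q P i \<inter> Dp n I0 S1 i))"
      using f by (metis of_nat_fact of_nat_le_iff of_nat_mult)
    then show ?thesis using e1 by (intro mult_right_mono mult_left_mono) auto
  qed
  finally show ?thesis using True by (simp add: m_def)
qed




theorem mainTheorem13:
  fixes q n :: nat and \<epsilon> :: real and I0 S1 :: "nat set"
  assumes "q > 0" and "0 < \<epsilon>" and "\<epsilon> < 1"
    and "I0 \<subseteq> {..<n*q}" and "real (card I0) \<ge> \<epsilon> * real (n*q)"
    and "S1 \<subseteq> {..<n}" and "real (card S1) \<ge> \<epsilon> * real n"
  shows "measure_pmf.prob (random_problem n q)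
           {P. (\<Sum>i\<in>I0. real (num_applications n q P i)) \<ge> real n * sqrt (ln (real n))
               \<and> (\<forall>i\<in>I0. applied n q P i \<inter> S1 = {})}
         \<le> (1 - \<epsilon>) powr (real n * sqrt (ln (real n)))"
proof -
  note e0 = assms(2) and e1 = assms(3) and I0 = assms(4) and S1 = assms(6) and cS = assms(7)
  define x where "x = real n * sqrt (ln (real n))"
  define \<Omega> where "\<Omega> = profiles n q"
  define Om where "Om = OmP n q I0 S1"
  define Ev where "Ev = {P. (\<Sum>i\<in>I0. real (num_applications n q P i)) \<ge> x
               \<and> (\<forall>i\<in>I0. applied n q P i \<inter> S1 = {})}"
  define E where "E = \<Omega> \<inter> Ev"
  define r where "r = (1 - \<epsilon>) powr x"
  define M where "M = (\<lambda>P. \<Sum>i\<in>I0. mlen n q P i)"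
  have fin\<Omega>: "finite \<Omega>" unfolding \<Omega>_def by (rule finite_profiles)
  have ne\<Omega>: "\<Omega> \<noteq> {}" unfolding \<Omega>_def profiles_def by (simp add: PiE_eq_empty_iff)
  have finOm: "finite Om" unfolding Om_def OmP_def PR_def Dp_def Gset_def
    by (intro finite_cartesian_product finite_PiE) auto
  have neOm: "Om \<noteq> {}" unfolding Om_def OmP_def PR_def Dp_def
    using Gset_ne[of "{..<n}" S1] S1 finite_subset by (auto simp: PiE_eq_empty_iff)
  have r0: "0 < r" unfolding r_def using e1 by simp
  have EO: "E \<subseteq> \<Omega>" unfolding E_def by blast
  have finE: "finite E" using EO fin\<Omega> finite_subset by blast
  have prob: "measure_pmf.prob (random_problem n q) Ev = real (card E) / real (card \<Omega>)"
    unfolding random_problem_def \<Omega>_def[symmetric] E_def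
    by (rule measure_pmf_of_set[OF ne\<Omega> fin\<Omega>])
  have finCC: "finite (CC n q P)" for P
    using CC_sub[of n q P] fin\<Omega> finite_subset unfolding \<Omega>_def by blast
  have w: "real (card Om) \<le> r * real (card \<Omega>) * (real (card (CC n q P \<inter> Om)) / real (card (CC n q P)))"
    if PE: "P \<in> E" for P
  proof -
    have P: "P \<in> profiles n q" using PE unfolding E_def \<Omega>_def by blast
    have ev: "x \<le> (\<Sum>i\<in>I0. real (num_applications n q P i))" "\<forall>i\<in>I0. applied n q P i \<inter> S1 = {}"
      using PE unfolding E_def Ev_def by auto
    have av: "i \<in> I0 \<longrightarrow> set (take (mlen n q P i) (fst P i)) \<inter> S1 = {}" if "i < n*q" for i
      using ev(2) applied_eq[OF P that] by auto
    have xM: "x \<le> real (M P)"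
    proof -
      have "(\<Sum>i\<in>I0. real (num_applications n q P i)) = (\<Sum>i\<in>I0. real (mlen n q P i))"
        using num_app_eq[OF P] I0 by (intro sum.cong) auto
      then show ?thesis using ev(1) by (simp add: M_def)
    qed
    have pM: "(1 - \<epsilon>) ^ M P \<le> r"
    proof -
      have "(1 - \<epsilon>) ^ M P = (1 - \<epsilon>) powr real (M P)" using e1 by (simp add: powr_realpow)
      also have "\<dots> \<le> (1 - \<epsilon>) powr x" using xM e0 e1 by (intro powr_mono') auto
      finally show ?thesis unfolding r_def .
    qed
    define c where "c = (\<lambda>i. if i \<in> I0 then (1 - \<epsilon>) ^ mlen n q P i else (1::real))"
    have ci: "real (card (Ext n q P i)) * real (card (Dp n I0 S1 i))
        \<le> c i * real (card (Ext n q P i \<inter> Dp n I0 S1 i)) * fact n" if "i \<in> {..<n*q}" for i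
      unfolding c_def using coord_ineq[OF P _ S1 e0 e1 cS av] that by auto
    have pc: "(\<Prod>i<n*q. c i) = (1 - \<epsilon>) ^ M P"
    proof -
      have "(\<Prod>i<n*q. c i) = (\<Prod>i\<in>{..<n*q} \<inter> I0. (1 - \<epsilon>) ^ mlen n q P i)"
        unfolding c_def by (rule prod.inter_restrict[symmetric]) simp
      also have "{..<n*q} \<inter> I0 = I0" using I0 by blast
      finally show ?thesis by (simp add: M_def power_sum)
    qed
    have "real (card (CC n q P)) * real (card Om)
        = (\<Prod>i<n*q. real (card (Ext n q P i)) * real (card (Dp n I0 S1 i))) * real (card (PR n q))"
      unfolding card_CC[OF P] Om_def card_OmP by (simp add: prod.distrib of_nat_prod)
    also have "\<dots> \<le> (\<Prod>i<n*q. c i * real (card (Ext n q P i \<inter> Dp n I0 S1 i)) * fact n) * real (card (PR n q))"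
      by (intro mult_right_mono prod_mono) (use ci in auto)
    also have "\<dots> = (\<Prod>i<n*q. c i) * real (card (CC n q P \<inter> Om)) * real (card \<Omega>)"
      unfolding card_CC_Om[OF P S1] \<Omega>_def card_profiles Om_def by (simp add: prod.distrib of_nat_prod)
    also have "\<dots> \<le> r * real (card (CC n q P \<inter> Om)) * real (card \<Omega>)"
      unfolding pc using pM by (intro mult_right_mono) auto
    finally have A: "real (card (CC n q P)) * real (card Om) \<le> r * real (card (CC n q P \<inter> Om)) * real (card \<Omega>)" .
    have "card (CC n q P) \<noteq> 0" using CC_refl[OF P] finCC[of P] by auto
    then have "0 < real (card (CC n q P))" by simp
    then show ?thesis using A by (simp add: field_simps)
  qed
  have B: "(\<Sum>P\<in>E. real (card (CC n q P \<inter> Om)) / real (card (CC n q P))) \<le> real (card Om)"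
  proof (rule double_count[OF finE finOm finCC])
    show "P \<in> CC n q P" if "P \<in> E" for P using that EO CC_refl unfolding \<Omega>_def by blast
    show "CC n q P' = CC n q P" if "P \<in> E" "P' \<in> CC n q P" for P P'
      using that EO CC_cl unfolding \<Omega>_def by blast
  qed
  have "real (card E) * real (card Om) = (\<Sum>P\<in>E. real (card Om))" by simp
  also have "\<dots> \<le> (\<Sum>P\<in>E. r * real (card \<Omega>) * (real (card (CC n q P \<inter> Om)) / real (card (CC n q P))))"
    by (rule sum_mono) (rule w)
  also have "\<dots> = r * real (card \<Omega>) * (\<Sum>P\<in>E. real (card (CC n q P \<inter> Om)) / real (card (CC n q P)))"
    by (simp add: sum_distrib_left)
  also have "\<dots> \<le> r * real (card \<Omega>) * real (card Om)"
    using B r0 by (intro mult_left_mono) auto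
  finally have C: "real (card E) * real (card Om) \<le> r * real (card \<Omega>) * real (card Om)" .
  have "0 < real (card Om)" using finOm neOm by (simp add: card_gt_0_iff)
  then have "real (card E) \<le> r * real (card \<Omega>)" using C by simp
  moreover have "0 < real (card \<Omega>)" using fin\<Omega> ne\<Omega> by (simp add: card_gt_0_iff)
  ultimately have "real (card E) / real (card \<Omega>) \<le> r" by (simp add: divide_simps)
  then show ?thesis using prob unfolding Ev_def x_def r_def by simp
qed


end
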